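(* Let $X$ be a random vector in $\mathbb{R}^n$, let $m\ge1$ be an integer and let $x\in\mathcal{C}_m(X)$. Then, for any norm $\|\cdot\|$ on $\mathbb{R}^n$, $$\mathbb{E}\left[\frac{1}{\|X-x\|^m}\right]=+\infty.$$
   Context: For a random vector $X$ in $\mathbb{R}^n$ and an integer $m\ge0$, the $m$-dimensional mould $\mathcal{C}_m(X)$ is the set of all $x\in\mathbb{R}^n$ such that $\liminf_{\epsilon\to0^+}\mathbb{P}(\|X-x\|_2<\epsilon)/\epsilon^m>0$ (this set does not change if $\|\cdot\|_2$ is replaced by any other norm on $\mathbb{R}^n$). *)

theory Defs
  imports "HOL-Probability.Probability"
begin

definition mould :: "'b measure \<Rightarrow> ('b \<Rightarrow> 'a::euclidean_space) \<Rightarrow> nat \<Rightarrow> 'a set" where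
  "mould M X m = {x. Liminf (at_right (0::real))
      (\<lambda>\<epsilon>. ereal (measure M {\<omega> \<in> space M. norm (X \<omega> - x) < \<epsilon>} / \<epsilon> ^ m)) > 0}"

definition is_norm :: "('a::real_vector \<Rightarrow> real) \<Rightarrow> bool" where
  "is_norm N \<longleftrightarrow> (\<forall>x. N x = 0 \<longleftrightarrow> x = 0) \<and> (\<forall>c x. N (c *\<^sub>R x) = \<bar>c\<bar> * N x)
     \<and> (\<forall>x y. N (x + y) \<le> N x + N y)"

end

theory Submission
  imports Defs
begin

lemma is_norm_nonneg:
  assumes "is_norm N" shows "N v \<ge> 0"
proof -
  have "N 0 = 0" using assms unfolding is_norm_def by blast
  moreover have "N (v + (-1) *\<^sub>R v) \<le> N v + N ((-1) *\<^sub>R v)"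
    using assms unfolding is_norm_def by blast
  moreover have "N ((-1) *\<^sub>R v) = \<bar>-1\<bar> * N v" using assms unfolding is_norm_def by blast
  ultimately show ?thesis by simp
qed

lemma is_norm_sum:
  assumes "is_norm N" and "finite S"
  shows "N (\<Sum>i\<in>S. f i) \<le> (\<Sum>i\<in>S. N (f i))"
  using assms(2)
proof (induction S rule: finite_induct)
  case empty
  have "N 0 = 0" using assms(1) unfolding is_norm_def by blast
  then show ?case by simp
next
  case (insert a S)
  have "N (f a + sum f S) \<le> N (f a) + N (sum f S)"
    using assms(1) unfolding is_norm_def by blast
  then show ?case using insert by simp
qed

lemma is_norm_bound:
  fixes N :: "'a::euclidean_space \<Rightarrow> real"
  assumes "is_norm N"
  shows "\<exists>C>0. \<forall>v. N v \<le> C * norm v"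
proof -
  define C where "C = 1 + (\<Sum>b\<in>Basis. N b)"
  have nn: "\<And>v. N v \<ge> 0" using is_norm_nonneg[OF assms] .
  have Cpos: "C > 0" unfolding C_def using nn by (simp add: add_pos_nonneg sum_nonneg)
  have "N v \<le> C * norm v" for v
  proof -
    have "N v = N (\<Sum>b\<in>Basis. (v \<bullet> b) *\<^sub>R b)" by (simp add: euclidean_representation)
    also have "\<dots> \<le> (\<Sum>b\<in>Basis. N ((v \<bullet> b) *\<^sub>R b))" by (rule is_norm_sum[OF assms]) simp
    also have "\<dots> = (\<Sum>b\<in>Basis. \<bar>v \<bullet> b\<bar> * N b)"
      using assms unfolding is_norm_def by simp
    also have "\<dots> \<le> (\<Sum>b\<in>Basis. norm v * N b)"
      by (rule sum_mono) (simp add: Basis_le_norm mult_right_mono nn)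
    also have "\<dots> = norm v * (\<Sum>b\<in>Basis. N b)" by (simp add: sum_distrib_left)
    also have "\<dots> \<le> C * norm v" unfolding C_def
      by (simp add: algebra_simps)
    finally show ?thesis .
  qed
  then show ?thesis using Cpos by blast
qed

lemma geom_bound:
  fixes q :: real assumes "q \<ge> 2"
  shows "(\<Sum>k\<le>j. q ^ (k+1)) \<le> 2 * q ^ (j+1)"
proof (induction j)
  case 0
  then show ?case using assms by simp
next
  case (Suc j)
  have "2 * q ^ (j+1) \<le> q * q ^ (j+1)"
    using assms by (intro mult_right_mono) auto
  then show ?case using Suc by simp
qed

theorem mainTheorem4:
  fixes M :: "'b measure" and X :: "'b \<Rightarrow> 'a::euclidean_space"
    and m :: nat and x :: 'a and N :: "'a \<Rightarrow> real"
  assumes "prob_space M"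
    and "X \<in> borel_measurable M"
    and "m \<ge> 1"
    and "x \<in> mould M X m"
    and "is_norm N"
  shows "(\<integral>\<^sup>+ \<omega>. inverse (ennreal (N (X \<omega> - x) ^ m)) \<partial>M) = \<infinity>"
proof -
  interpret P: prob_space M by (rule assms(1))
  obtain C where Cpos: "C > 0" and NC: "\<And>v. N v \<le> C * norm v"
    using is_norm_bound[OF assms(5)] by blast
  have nn: "\<And>v. N v \<ge> 0" using is_norm_nonneg[OF assms(5)] .
  let ?f = "\<lambda>\<epsilon>. ereal (measure M {\<omega> \<in> space M. norm (X \<omega> - x) < \<epsilon>} / \<epsilon> ^ m)"
  have L: "0 < Liminf (at_right (0::real)) ?f" using assms(4) unfolding mould_def by simp
  obtain c where c: "0 < ereal c" "ereal c < Liminf (at_right (0::real)) ?f"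
  proof -
    obtain z where z: "0 < z" "z < Liminf (at_right (0::real)) ?f" using L dense by blast
    then have "z \<noteq> \<infinity>" by auto
    moreover have "z \<noteq> -\<infinity>" using z by auto
    ultimately obtain c where "z = ereal c" by (cases z) auto
    then show ?thesis using that z by blast
  qed
  have cpos: "c > 0" using c by simp
  have "eventually (\<lambda>\<epsilon>. ereal c < ?f \<epsilon>) (at_right (0::real))"
    by (rule less_LiminfD[OF c(2)])
  then obtain \<delta> where dpos: "\<delta> > 0" and dd: "\<And>e. e > 0 \<Longrightarrow> e < \<delta> \<Longrightarrow> ereal c < ?f e"
    unfolding eventually_at_right_field by auto
  define A where "A e = {\<omega> \<in> space M. norm (X \<omega> - x) < e}" for e
  have Ameas: "A e \<in> sets M" for e unfolding A_def using assms(2) by measurable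
  have Abound: "measure M (A e) \<ge> c * e ^ m" if "e > 0" "e < \<delta>" for e
  proof -
    have "c < measure M (A e) / e ^ m" using dd[OF that] unfolding A_def by simp
    then show ?thesis using that by (simp add: field_simps)
  qed
  define D where "D = C * \<delta>"
  have Dpos: "D > 0" using Cpos dpos unfolding D_def by simp
  define \<epsilon> where "\<epsilon> k = \<delta> / 2 ^ (k+1)" for k :: nat
  define a where "a k = 2 ^ ((k+1)*m) / (2 * D ^ m)" for k :: nat
  have apos: "a k \<ge> 0" for k unfolding a_def using Dpos by simp
  have epos: "\<epsilon> k > 0" "\<epsilon> k < \<delta>" for k
  proof -
    have "(1::real) \<le> 2^k" by simp
    then have "(1::real) < 2 * 2^k" by linarith
    then show "\<epsilon> k > 0" "\<epsilon> k < \<delta>" unfolding \<epsilon>_def using dpos by (auto simp: field_simps)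
  qed
  define g where "g J \<omega> = (\<Sum>k<J. a k * indicator (A (\<epsilon> k)) \<omega>)" for J \<omega>
  have gnn: "g J \<omega> \<ge> 0" for J \<omega> unfolding g_def using apos by (intro sum_nonneg) auto
  have pw: "ennreal (g J \<omega>) \<le> inverse (ennreal (N (X \<omega> - x) ^ m))" if "\<omega> \<in> space M" for J \<omega>
  proof (cases "N (X \<omega> - x) = 0")
    case True
    have "N (X \<omega> - x) ^ m = 0" using assms(3) True by (simp add: power_0_left)
    then have "inverse (ennreal (N (X \<omega> - x) ^ m)) = \<top>"
      by (metis ennreal_0 ennreal_inverse_zero)
    then show ?thesis using top_greatest by metis
  next
    case False
    define r where "r = norm (X \<omega> - x)"
    have Npos: "N (X \<omega> - x) > 0" using False nn[of "X \<omega> - x"] by simp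
    have NCr: "N (X \<omega> - x) \<le> C * r" using NC unfolding r_def .
    have "C * r > 0" using Npos NCr by linarith
    then have rpos: "r > 0" using Cpos by (simp add: zero_less_mult_iff)
    define S where "S = {k\<in>{..<J}. r < \<epsilon> k}"
    have gS: "g J \<omega> = (\<Sum>k\<in>S. a k)"
      unfolding g_def S_def A_def r_def using that
      by (simp add: indicator_def sum.inter_filter[symmetric] if_distrib cong: if_cong) (rule sum.cong, auto)
    have "g J \<omega> \<le> 1 / (C * r) ^ m"
    proof (cases "S = {}")
      case True
      then show ?thesis using gS Cpos rpos by simp
    next
      case False
      have finS: "finite S" unfolding S_def by simp
      define j where "j = Max S"
      have jS: "j \<in> S" unfolding j_def using False finS by simp
      have Sj: "S \<subseteq> {..j}" unfolding j_def using finS by auto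
      have "(\<Sum>k\<in>S. a k) \<le> (\<Sum>k\<le>j. a k)" by (rule sum_mono2) (use Sj apos in auto)
      also have "\<dots> = (\<Sum>k\<le>j. ((2::real)^m) ^ (k+1)) / (2 * D ^ m)"
      proof -
        have eq: "\<And>k. (2::real)^((k+1)*m) = (2^m)^(k+1)"
          by (metis power_mult mult.commute)
        show ?thesis unfolding a_def eq by (simp add: sum_divide_distrib)
      qed
      also have "\<dots> \<le> (2 * ((2::real)^m) ^ (j+1)) / (2 * D ^ m)"
      proof -
        have "(2::real) \<le> 2 ^ m" using assms(3)
          by (metis power_one_right power_increasing one_le_numeral)
        then show ?thesis using Dpos by (intro divide_right_mono geom_bound) auto
      qed
      also have "\<dots> = 1 / (D / 2 ^ (j+1)) ^ m"
      proof -
        have pc: "((2::real) ^ m) ^ j = (2 ^ j) ^ m"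
          by (metis power_mult mult.commute)
        show ?thesis using Dpos by (simp add: power_divide power_mult mult.commute pc)
      qed
      also have "\<dots> \<le> 1 / (C * r) ^ m"
      proof -
        have "r < \<delta> / 2 ^ (j+1)" using jS unfolding S_def \<epsilon>_def by simp
        then have "C * r \<le> D / 2 ^ (j+1)" unfolding D_def using Cpos
          by (simp add: field_simps)
        then have "(C * r) ^ m \<le> (D / 2 ^ (j+1)) ^ m" using Cpos rpos
          by (intro power_mono) auto
        then show ?thesis using Cpos rpos Dpos
          by (intro divide_left_mono) (auto intro!: mult_pos_pos)
      qed
      finally show ?thesis using gS by simp
    qed
    also have "\<dots> \<le> 1 / N (X \<omega> - x) ^ m"
      using Npos NCr by (intro divide_left_mono power_mono) auto
    finally have "g J \<omega> \<le> inverse (N (X \<omega> - x) ^ m)" by (simp add: field_simps)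
    then have "ennreal (g J \<omega>) \<le> ennreal (inverse (N (X \<omega> - x) ^ m))"
      by (rule ennreal_leI)
    also have "\<dots> = inverse (ennreal (N (X \<omega> - x) ^ m))"
      using Npos by (simp add: inverse_ennreal)
    finally show ?thesis .
  qed
  define c' where "c' = c / (2 * C ^ m)"
  have c'pos: "c' > 0" unfolding c'_def using cpos Cpos by simp
  have intg: "(\<integral>\<^sup>+ \<omega>. ennreal (g J \<omega>) \<partial>M) \<ge> ennreal (real J * c')" for J
  proof -
    have "(\<integral>\<^sup>+ \<omega>. ennreal (g J \<omega>) \<partial>M) = (\<integral>\<^sup>+ \<omega>. (\<Sum>k<J. ennreal (a k) * indicator (A (\<epsilon> k)) \<omega>) \<partial>M)"
    proof (rule nn_integral_cong)
      fix \<omega>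
      have "ennreal (g J \<omega>) = (\<Sum>k<J. ennreal (a k * indicator (A (\<epsilon> k)) \<omega>))"
        unfolding g_def using apos by (intro sum_ennreal[symmetric]) auto
      also have "\<dots> = (\<Sum>k<J. ennreal (a k) * indicator (A (\<epsilon> k)) \<omega>)"
        by (rule sum.cong) (auto simp: indicator_def)
      finally show "ennreal (g J \<omega>) = (\<Sum>k<J. ennreal (a k) * indicator (A (\<epsilon> k)) \<omega>)" .
    qed
    also have "\<dots> = (\<Sum>k<J. \<integral>\<^sup>+ \<omega>. ennreal (a k) * indicator (A (\<epsilon> k)) \<omega> \<partial>M)"
      by (rule nn_integral_sum) (use Ameas in auto)
    also have "\<dots> = (\<Sum>k<J. ennreal (a k) * emeasure M (A (\<epsilon> k)))"
      using nn_integral_cmult_indicator[OF Ameas] by simp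
    also have "\<dots> = ennreal (\<Sum>k<J. a k * measure M (A (\<epsilon> k)))"
      by (subst sum_ennreal[symmetric]) (auto simp: apos P.emeasure_eq_measure ennreal_mult)
    also have "\<dots> \<ge> ennreal (real J * c')"
    proof (rule ennreal_leI)
      have "a k * measure M (A (\<epsilon> k)) \<ge> c'" for k
      proof -
        have "a k * measure M (A (\<epsilon> k)) \<ge> a k * (c * \<epsilon> k ^ m)"
          using Abound[OF epos] apos by (intro mult_left_mono) auto
        also have "a k * (c * \<epsilon> k ^ m) = c'"
        proof -
          have pc: "(2::real) ^ ((k+1)*m) = (2 ^ (k+1)) ^ m"
            by (metis power_mult mult.commute)
          show ?thesis
            unfolding a_def \<epsilon>_def c'_def D_def pc using Cpos dpos
            by (simp add: power_divide power_mult_distrib field_simps)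
        qed
        finally show ?thesis .
      qed
      then have "(\<Sum>k<J. c') \<le> (\<Sum>k<J. a k * measure M (A (\<epsilon> k)))"
        by (intro sum_mono) auto
      then show "real J * c' \<le> (\<Sum>k<J. a k * measure M (A (\<epsilon> k)))" by simp
    qed
    finally show ?thesis .
  qed
  have big: "ennreal (real J * c') \<le> (\<integral>\<^sup>+ \<omega>. inverse (ennreal (N (X \<omega> - x) ^ m)) \<partial>M)" for J
    by (rule order_trans[OF intg[of J] nn_integral_mono[OF pw]])
  show ?thesis
  proof (rule ccontr)
    let ?I = "(\<integral>\<^sup>+ \<omega>. inverse (ennreal (N (X \<omega> - x) ^ m)) \<partial>M)"
    assume "?I \<noteq> \<infinity>"
    then obtain t where t: "?I = ennreal t" "t \<ge> 0" by (cases ?I) auto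
    obtain J :: nat where J: "real J > t / c'" using reals_Archimedean2 by blast
    then have "real J * c' > t" using c'pos by (simp add: field_simps)
    moreover have "real J * c' \<le> t" using big[of J] t c'pos by simp
    ultimately show False by simp
  qed
qed

end
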